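(* For all $n\in\mathbb{Z}^+$ and all vectors $\zeta=(\zeta^j)_{j\in I_n}$, $\xi=(\xi^j)_{j\in I_n}$ of $\mathbb{R}^N$, $$\sup_{p\in I_n}\Big|\sum_{j,k\in I_n}\mathbb{E}^\gamma\big[\tilde J_n^{pj}\tilde J_n^{-pk}\big]\zeta^j\xi^k\Big|\le ab\,\|\zeta\|_2\|\xi\|_2.$$
   Context: For $n\ge0$, $I_n=\{-n,\dots,n\}$, $N=2n+1$, "$k\bmod I_n$" is the element of $I_n$ congruent to $k$ mod $N$, and $F_N=e^{2\pi i/N}$. $R_{\mathcal J}:\mathbb{Z}^2\to\mathbb{R}$ satisfies $|R_{\mathcal J}(k,l)|\le a_kb_l$ for positive sequences with $|k|^3a_k\to0$ and $\sum_lb_l<\infty$, $a=\sum_ka_k$, $b=\sum_kb_k$; $R_{\mathcal J}$ is the autocorrelation of a centered stationary Gaussian field on $\mathbb{Z}^2$ with strictly positive spectral density. Under $\gamma$, $J_n=(J_n^{ij})_{i,j\in I_n}$ are centered jointly Gaussian with $\mathbb{E}^\gamma[J_n^{ij}J_n^{kl}]=\frac1NR_{\mathcal J}((k-i)\bmod I_n,(l-j)\bmod I_n)$. $\tilde J_n^{pk}=\sum_{j\in I_n}J_n^{jk}F_N^{-jp}$ for $p,k\in I_n$ (discrete Fourier transform in the first index), with $-p$ understood in $I_n$. *)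

theory Defs
  imports "HOL-Probability.Probability"
begin

definition I :: "nat \<Rightarrow> int set" where
  "I n = {- int n .. int n}"

definition NN :: "nat \<Rightarrow> int" where
  "NN n = 2 * int n + 1"

definition modI :: "nat \<Rightarrow> int \<Rightarrow> int" where
  "modI n k = (k + int n) mod NN n - int n"

definition FN :: "nat \<Rightarrow> complex" where
  "FN n = cis (2 * pi / real_of_int (NN n))"

definition tJ :: "nat \<Rightarrow> (int \<Rightarrow> int \<Rightarrow> 'a \<Rightarrow> real) \<Rightarrow> int \<Rightarrow> int \<Rightarrow> 'a \<Rightarrow> complex" where
  "tJ n J p k \<omega> = (\<Sum>j\<in>I n. complex_of_real (J j k \<omega>) * FN n powi (- (j * p)))"

definition centered_gaussian_family :: "'a measure \<Rightarrow> 'i set \<Rightarrow> ('i \<Rightarrow> 'a \<Rightarrow> real) \<Rightarrow> bool" where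
  "centered_gaussian_family M S X \<longleftrightarrow>
     (\<forall>i\<in>S. X i \<in> borel_measurable M) \<and>
     (\<forall>c :: 'i \<Rightarrow> real.
        (AE \<omega> in M. (\<Sum>i\<in>S. c i * X i \<omega>) = 0) \<or>
        (\<exists>\<sigma>>0. distributed M lborel (\<lambda>\<omega>. \<Sum>i\<in>S. c i * X i \<omega>) (normal_density 0 \<sigma>)))"

definition spectral_density :: "(int \<times> int \<Rightarrow> real) \<Rightarrow> real \<Rightarrow> real \<Rightarrow> complex" where
  "spectral_density R \<theta>1 \<theta>2 =
     infsum (\<lambda>(k, l). complex_of_real (R (k, l)) * cis (- (real_of_int k * \<theta>1 + real_of_int l * \<theta>2))) UNIV"

text \<open>R is the autocorrelation of a centered stationary Gaussian field on Z^2 with strictly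
  positive spectral density (for absolutely summable R): R is even and its spectral density
  is real and strictly positive everywhere.\<close>
definition stationary_autocorr_pos_spectral :: "(int \<times> int \<Rightarrow> real) \<Rightarrow> bool" where
  "stationary_autocorr_pos_spectral R \<longleftrightarrow>
     (\<forall>k l. R (-k, -l) = R (k, l)) \<and>
     (\<forall>\<theta>1 \<theta>2. spectral_density R \<theta>1 \<theta>2 \<in> \<real> \<and> Re (spectral_density R \<theta>1 \<theta>2) > 0)"

definition norm2 :: "nat \<Rightarrow> (int \<Rightarrow> real) \<Rightarrow> real" where
  "norm2 n z = sqrt (\<Sum>j\<in>I n. (z j)\<^sup>2)"

end

theory Submission imports Defs begin

lemma NN_pos: "NN n > 0" by (simp add: NN_def)

lemma modI_in: "modI n k \<in> I n"
proof -
  have "0 \<le> (k + int n) mod NN n" "(k + int n) mod NN n < NN n" using NN_pos[of n] by auto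
  then show ?thesis by (auto simp: modI_def I_def NN_def)
qed

lemma modI_id: "k \<in> I n \<Longrightarrow> modI n k = k"
  by (auto simp: modI_def I_def NN_def)

lemma modI_add: "modI n (modI n x + y) = modI n (x + y)"
proof -
  have "(modI n x + y + int n) mod NN n = ((x + int n) mod NN n + y) mod NN n"
    by (simp add: modI_def algebra_simps)
  also have "\<dots> = (x + int n + y) mod NN n" by (simp add: mod_add_left_eq)
  finally show ?thesis by (simp add: modI_def algebra_simps)
qed

lemma modI_shift_bij: "bij_betw (\<lambda>k. modI n (k + c)) (I n) (I n)"
proof (rule bij_betw_byWitness[where f'="\<lambda>k. modI n (k - c)"])
  show "\<forall>a\<in>I n. modI n (modI n (a + c) - c) = a"
    using modI_add[of n _ "-c"] modI_id by simp
  show "\<forall>a\<in>I n. modI n (modI n (a - c) + c) = a"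
    using modI_add[of n _ "c"] modI_id by simp
qed (auto simp: modI_in)

lemma sum_modI_shift: "(\<Sum>k\<in>I n. f (modI n (k + c))) = (\<Sum>k\<in>I n. f k)"
  using sum.reindex_bij_betw[OF modI_shift_bij[of n c], of f] by simp

lemma card_I: "real (card (I n)) = real_of_int (NN n)"
  by (simp add: I_def NN_def)

lemma finite_I[simp]: "finite (I n)" by (simp add: I_def)

lemma norm_FN: "cmod (FN n powi k) = 1"
  by (simp add: FN_def norm_power_int)


lemma E_bound:
  fixes R :: "int \<times> int \<Rightarrow> real" and a b :: "int \<Rightarrow> real" and M :: "'a measure"
    and J :: "int \<Rightarrow> int \<Rightarrow> 'a \<Rightarrow> real"
  assumes R_bound: "\<And>k l. \<bar>R (k, l)\<bar> \<le> a k * b l"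
    and J_int: "\<And>i j k l. i \<in> I n \<Longrightarrow> j \<in> I n \<Longrightarrow> k \<in> I n \<Longrightarrow> l \<in> I n \<Longrightarrow>
                   integrable M (\<lambda>\<omega>. J i j \<omega> * J k l \<omega>)"
    and J_cov: "\<And>i j k l. i \<in> I n \<Longrightarrow> j \<in> I n \<Longrightarrow> k \<in> I n \<Longrightarrow> l \<in> I n \<Longrightarrow>
                   integral\<^sup>L M (\<lambda>\<omega>. J i j \<omega> * J k l \<omega>)
                     = R (modI n (k - i), modI n (l - j)) / real_of_int (NN n)"
    and j: "j \<in> I n" and k: "k \<in> I n"
  shows "cmod (integral\<^sup>L M (\<lambda>\<omega>. tJ n J p j \<omega> * tJ n J q k \<omega>))
          \<le> (\<Sum>m\<in>I n. a m) * b (modI n (k - j))"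
proof -
  define c where "c i i' = FN n powi (- (i * p)) * FN n powi (- (i' * q))" for i i'
  have prod: "tJ n J p j \<omega> * tJ n J q k \<omega> =
     (\<Sum>i\<in>I n. \<Sum>i'\<in>I n. complex_of_real (J i j \<omega> * J i' k \<omega>) * c i i')" for \<omega>
    unfolding tJ_def sum_product c_def by (intro sum.cong refl) (simp add: algebra_simps)
  have "integral\<^sup>L M (\<lambda>\<omega>. tJ n J p j \<omega> * tJ n J q k \<omega>)
      = (\<Sum>i\<in>I n. \<Sum>i'\<in>I n. complex_of_real (integral\<^sup>L M (\<lambda>\<omega>. J i j \<omega> * J i' k \<omega>)) * c i i')"
  proof -
    have int1: "integrable M (\<lambda>\<omega>. complex_of_real (J i j \<omega> * J i' k \<omega>) * c i i')"
      if "i \<in> I n" "i' \<in> I n" for i i'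
      using J_int[OF that(1) j that(2) k] by (intro integrable_mult_left integrable_of_real)
    have "integral\<^sup>L M (\<lambda>\<omega>. tJ n J p j \<omega> * tJ n J q k \<omega>)
       = (\<Sum>i\<in>I n. integral\<^sup>L M (\<lambda>\<omega>. \<Sum>i'\<in>I n. complex_of_real (J i j \<omega> * J i' k \<omega>) * c i i'))"
      unfolding prod by (rule Bochner_Integration.integral_sum[where f="\<lambda>i \<omega>. \<Sum>i'\<in>I n. complex_of_real (J i j \<omega> * J i' k \<omega>) * c i i'"]) (use int1 in auto)
    also have "\<dots> = (\<Sum>i\<in>I n. \<Sum>i'\<in>I n. integral\<^sup>L M (\<lambda>\<omega>. complex_of_real (J i j \<omega> * J i' k \<omega>) * c i i'))"
      by (rule sum.cong[OF refl], rule Bochner_Integration.integral_sum[where f="\<lambda>i' \<omega>. complex_of_real (J _ j \<omega> * J i' k \<omega>) * c _ i'"]) (use int1 in auto)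
    also have "\<dots> = (\<Sum>i\<in>I n. \<Sum>i'\<in>I n. complex_of_real (integral\<^sup>L M (\<lambda>\<omega>. J i j \<omega> * J i' k \<omega>)) * c i i')"
      by (intro sum.cong refl) (simp only: integral_mult_left_zero integral_complex_of_real)
    finally show ?thesis .
  qed
  also have "cmod \<dots> \<le> (\<Sum>i\<in>I n. \<Sum>i'\<in>I n. \<bar>integral\<^sup>L M (\<lambda>\<omega>. J i j \<omega> * J i' k \<omega>)\<bar>)"
    by (rule order_trans[OF norm_sum sum_mono], rule order_trans[OF norm_sum sum_mono])
       (simp add: norm_mult c_def norm_FN)
  also have "\<dots> \<le> (\<Sum>i\<in>I n. \<Sum>i'\<in>I n. a (modI n (i' - i)) * b (modI n (k - j)) / real_of_int (NN n))"
    using j k NN_pos[of n]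
    by (intro sum_mono) (auto simp: J_cov abs_div divide_right_mono R_bound)
  also have "\<dots> = (\<Sum>i\<in>I n. (\<Sum>m\<in>I n. a m) * b (modI n (k - j)) / real_of_int (NN n))"
  proof (intro sum.cong refl)
    fix i
    have "(\<Sum>i'\<in>I n. a (modI n (i' - i))) = (\<Sum>m\<in>I n. a m)"
      using sum_modI_shift[of "a" n "-i"] by simp
    then show "(\<Sum>i'\<in>I n. a (modI n (i' - i)) * b (modI n (k - j)) / real_of_int (NN n))
          = (\<Sum>m\<in>I n. a m) * b (modI n (k - j)) / real_of_int (NN n)"
      by (simp add: sum_divide_distrib[symmetric] sum_distrib_right[symmetric])
  qed
  also have "\<dots> = (\<Sum>m\<in>I n. a m) * b (modI n (k - j))"
    using card_I[of n] NN_pos[of n] by simp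
  finally show ?thesis .
qed

lemma conv_bound:
  fixes b \<zeta> \<xi> :: "int \<Rightarrow> real"
  assumes b_nn: "\<And>l. b l \<ge> 0"
  shows "(\<Sum>j\<in>I n. \<Sum>k\<in>I n. b (modI n (k - j)) * (\<bar>\<zeta> j\<bar> * \<bar>\<xi> k\<bar>))
        \<le> (\<Sum>l\<in>I n. b l) * norm2 n \<zeta> * norm2 n \<xi>"
proof -
  have "(\<Sum>j\<in>I n. \<Sum>k\<in>I n. b (modI n (k - j)) * (\<bar>\<zeta> j\<bar> * \<bar>\<xi> k\<bar>))
      = (\<Sum>j\<in>I n. \<Sum>l\<in>I n. b l * (\<bar>\<zeta> j\<bar> * \<bar>\<xi> (modI n (l + j))\<bar>))"
  proof (rule sum.cong[OF refl])
    fix j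
    have "(\<Sum>l\<in>I n. b l * (\<bar>\<zeta> j\<bar> * \<bar>\<xi> (modI n (l + j))\<bar>))
        = (\<Sum>k\<in>I n. b (modI n (k - j)) * (\<bar>\<zeta> j\<bar> * \<bar>\<xi> (modI n (modI n (k - j) + j))\<bar>))"
      using sum_modI_shift[of "\<lambda>l. b l * (\<bar>\<zeta> j\<bar> * \<bar>\<xi> (modI n (l + j))\<bar>)" n "-j"] by simp
    also have "\<dots> = (\<Sum>k\<in>I n. b (modI n (k - j)) * (\<bar>\<zeta> j\<bar> * \<bar>\<xi> k\<bar>))"
      by (intro sum.cong refl) (simp add: modI_add modI_id)
    finally show "(\<Sum>k\<in>I n. b (modI n (k - j)) * (\<bar>\<zeta> j\<bar> * \<bar>\<xi> k\<bar>)) =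
         (\<Sum>l\<in>I n. b l * (\<bar>\<zeta> j\<bar> * \<bar>\<xi> (modI n (l + j))\<bar>))" by simp
  qed
  also have "\<dots> = (\<Sum>l\<in>I n. b l * (\<Sum>j\<in>I n. \<bar>\<zeta> j\<bar> * \<bar>\<xi> (modI n (l + j))\<bar>))"
    by (subst sum.swap) (simp add: sum_distrib_left)
  also have "\<dots> \<le> (\<Sum>l\<in>I n. b l * (norm2 n \<zeta> * norm2 n \<xi>))"
  proof (intro sum_mono mult_left_mono b_nn)
    fix l
    have "(\<Sum>j\<in>I n. \<bar>\<zeta> j\<bar> * \<bar>\<xi> (modI n (l + j))\<bar>)
        \<le> L2_set \<zeta> (I n) * L2_set (\<lambda>j. \<xi> (modI n (l + j))) (I n)"
      by (rule L2_set_mult_ineq)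
    also have "L2_set (\<lambda>j. \<xi> (modI n (l + j))) (I n) = L2_set \<xi> (I n)"
      unfolding L2_set_def using sum_modI_shift[of "\<lambda>x. (\<xi> x)\<^sup>2" n l] by (simp add: add.commute)
    finally show "(\<Sum>j\<in>I n. \<bar>\<zeta> j\<bar> * \<bar>\<xi> (modI n (l + j))\<bar>) \<le> norm2 n \<zeta> * norm2 n \<xi>"
      by (simp add: norm2_def L2_set_def)
  qed
  also have "\<dots> = (\<Sum>l\<in>I n. b l) * norm2 n \<zeta> * norm2 n \<xi>"
    by (simp add: sum_distrib_right mult.assoc)
  finally show ?thesis .
qed

lemma inv_sq_int_summable: "(\<lambda>k::int. inverse ((real (nat \<bar>k\<bar>))^2)) summable_on UNIV"
proof -
  let ?f = "\<lambda>m::nat. inverse ((real m)^2)"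
  have s: "?f summable_on UNIV"
    using summable_on_UNIV_nonneg_real_iff[of ?f] inverse_power_summable[of 2] by simp
  have U: "(UNIV::int set) = int ` UNIV \<union> (\<lambda>m. - int m) ` UNIV"
  proof (intro set_eqI iffI)
    fix k :: int
    show "k \<in> int ` UNIV \<union> (\<lambda>m. - int m) ` UNIV"
    proof (cases "k \<ge> 0")
      case True
      then have "k = int (nat k)" by simp
      then show ?thesis by blast
    next
      case False
      then have "k = - int (nat (-k))" by simp
      then show ?thesis by blast
    qed
  qed simp
  have 1: "(\<lambda>k::int. inverse ((real (nat \<bar>k\<bar>))^2)) summable_on (int ` UNIV)"
    by (subst summable_on_reindex) (use s in \<open>auto simp: o_def\<close>)
  have 2: "(\<lambda>k::int. inverse ((real (nat \<bar>k\<bar>))^2)) summable_on ((\<lambda>m. - int m) ` UNIV)"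
    by (subst summable_on_reindex) (use s in \<open>auto simp: o_def inj_def\<close>)
  show ?thesis using summable_on_union[OF 1 2] U by simp
qed

lemma a_summable:
  fixes a :: "int \<Rightarrow> real"
  assumes a_pos: "\<And>k. a k > 0"
    and a_decay: "((\<lambda>k. real_of_int \<bar>k\<bar> ^ 3 * a k) \<longlongrightarrow> 0) cofinite"
  shows "a summable_on UNIV"
proof -
  have "\<forall>\<^sub>F k in cofinite. real_of_int \<bar>k\<bar> ^ 3 * a k < 1"
    using order_tendstoD(2)[OF a_decay] by simp
  then obtain S where S: "finite S" "\<And>k. k \<notin> S \<Longrightarrow> real_of_int \<bar>k\<bar> ^ 3 * a k < 1"
    unfolding eventually_cofinite by blast
  have cmp: "a k \<le> inverse ((real (nat \<bar>k\<bar>))^2)" if "k \<notin> S \<union> {0}" for k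
  proof -
    have k1: "real_of_int \<bar>k\<bar> \<ge> 1" using that by auto
    have r: "real (nat \<bar>k\<bar>) = real_of_int \<bar>k\<bar>" by simp
    have "real_of_int \<bar>k\<bar> ^ 2 * a k \<le> real_of_int \<bar>k\<bar> ^ 3 * a k"
      using k1 a_pos[of k] by (intro mult_right_mono power_increasing) auto
    also have "\<dots> < 1" using S(2) that by auto
    finally have "real_of_int \<bar>k\<bar> ^ 2 * a k < 1" .
    then show ?thesis unfolding r using k1
      by (simp add: field_simps)
  qed
  have "a summable_on (UNIV - (S \<union> {0}))"
    by (rule summable_on_comparison_test[OF summable_on_subset[OF inv_sq_int_summable]])
       (use cmp a_pos less_imp_le in auto)
  moreover have "a summable_on (S \<union> {0})" using S(1) by simp
  ultimately have "a summable_on ((UNIV - (S \<union> {0})) \<union> (S \<union> {0}))"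
    by (rule summable_on_union)
  moreover have "(UNIV - (S \<union> {0})) \<union> (S \<union> {0}) = UNIV" by blast
  ultimately show ?thesis by simp
qed

theorem corollaryB8:
  fixes R :: "int \<times> int \<Rightarrow> real"
    and a b :: "int \<Rightarrow> real"
    and M :: "'a measure"
    and n :: nat
    and J :: "int \<Rightarrow> int \<Rightarrow> 'a \<Rightarrow> real"
    and \<zeta> \<xi> :: "int \<Rightarrow> real"
  assumes a_pos: "\<And>k. a k > 0"
    and b_pos: "\<And>l. b l > 0"
    and R_bound: "\<And>k l. \<bar>R (k, l)\<bar> \<le> a k * b l"
    and a_decay: "((\<lambda>k. real_of_int \<bar>k\<bar> ^ 3 * a k) \<longlongrightarrow> 0) cofinite"
    and b_sum: "b summable_on UNIV"
    and R_field: "stationary_autocorr_pos_spectral R"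
    and M: "prob_space M"
    and n_pos: "n \<ge> 1"
    and J_gauss: "centered_gaussian_family M (I n \<times> I n) (\<lambda>(i, j). J i j)"
    and J_int: "\<And>i j k l. i \<in> I n \<Longrightarrow> j \<in> I n \<Longrightarrow> k \<in> I n \<Longrightarrow> l \<in> I n \<Longrightarrow>
                   integrable M (\<lambda>\<omega>. J i j \<omega> * J k l \<omega>)"
    and J_cov: "\<And>i j k l. i \<in> I n \<Longrightarrow> j \<in> I n \<Longrightarrow> k \<in> I n \<Longrightarrow> l \<in> I n \<Longrightarrow>
                   integral\<^sup>L M (\<lambda>\<omega>. J i j \<omega> * J k l \<omega>)
                     = R (modI n (k - i), modI n (l - j)) / real_of_int (NN n)"
  shows "(SUP p\<in>I n. cmod (\<Sum>j\<in>I n. \<Sum>k\<in>I n.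
            integral\<^sup>L M (\<lambda>\<omega>. tJ n J p j \<omega> * tJ n J (modI n (- p)) k \<omega>)
              * complex_of_real (\<zeta> j * \<xi> k)))
         \<le> infsum a UNIV * infsum b UNIV * norm2 n \<zeta> * norm2 n \<xi>"
proof -
  let ?A = "\<Sum>m\<in>I n. a m"
  let ?B = "\<Sum>l\<in>I n. b l"
  have as: "a summable_on UNIV" by (rule a_summable[OF a_pos a_decay])
  have A_le: "?A \<le> infsum a UNIV"
    using infsum_mono_neutral[of a "I n" a UNIV] as a_pos by (auto simp: less_imp_le)
  have B_le: "?B \<le> infsum b UNIV"
    using infsum_mono_neutral[of b "I n" b UNIV] b_sum b_pos by (auto simp: less_imp_le)
  have A_nn: "?A \<ge> 0" using a_pos by (simp add: sum_nonneg less_imp_le)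
  have B_nn: "?B \<ge> 0" using b_pos by (simp add: sum_nonneg less_imp_le)
  have N_nn: "norm2 n \<zeta> * norm2 n \<xi> \<ge> 0" unfolding norm2_def by (intro mult_nonneg_nonneg real_sqrt_ge_zero sum_nonneg) auto
  have bound: "cmod (\<Sum>j\<in>I n. \<Sum>k\<in>I n.
            integral\<^sup>L M (\<lambda>\<omega>. tJ n J p j \<omega> * tJ n J (modI n (- p)) k \<omega>)
              * complex_of_real (\<zeta> j * \<xi> k))
         \<le> infsum a UNIV * infsum b UNIV * norm2 n \<zeta> * norm2 n \<xi>" for p
  proof -
    let ?E = "\<lambda>j k. integral\<^sup>L M (\<lambda>\<omega>. tJ n J p j \<omega> * tJ n J (modI n (- p)) k \<omega>)"
    have "cmod (\<Sum>j\<in>I n. \<Sum>k\<in>I n. ?E j k * complex_of_real (\<zeta> j * \<xi> k))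
        \<le> (\<Sum>j\<in>I n. \<Sum>k\<in>I n. cmod (?E j k) * (\<bar>\<zeta> j\<bar> * \<bar>\<xi> k\<bar>))"
      by (rule order_trans[OF norm_sum sum_mono], rule order_trans[OF norm_sum sum_mono])
         (simp add: norm_mult abs_mult)
    also have "\<dots> \<le> (\<Sum>j\<in>I n. \<Sum>k\<in>I n. (?A * b (modI n (k - j))) * (\<bar>\<zeta> j\<bar> * \<bar>\<xi> k\<bar>))"
      by (intro sum_mono mult_right_mono E_bound[where R=R and a=a and b=b and n=n and M=M and J=J, OF R_bound J_int J_cov]) auto
    also have "\<dots> = ?A * (\<Sum>j\<in>I n. \<Sum>k\<in>I n. b (modI n (k - j)) * (\<bar>\<zeta> j\<bar> * \<bar>\<xi> k\<bar>))"
      by (simp add: sum_distrib_left mult.assoc)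
    also have "\<dots> \<le> ?A * (?B * norm2 n \<zeta> * norm2 n \<xi>)"
      by (intro mult_left_mono conv_bound A_nn) (use b_pos less_imp_le in auto)
    also have "\<dots> = ?A * (?B * (norm2 n \<zeta> * norm2 n \<xi>))" by (simp add: mult.assoc)
    also have "\<dots> \<le> infsum a UNIV * (infsum b UNIV * (norm2 n \<zeta> * norm2 n \<xi>))"
      by (rule mult_mono[OF A_le mult_right_mono[OF B_le N_nn]]) (use order_trans[OF A_nn A_le] B_nn N_nn in auto)
    finally show ?thesis by (simp add: mult.assoc)
  qed
  have ne: "I n \<noteq> {}" by (auto simp: I_def)
  show ?thesis by (rule cSUP_least[OF ne bound])
qed

end
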